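(* Let $T$ be a threshold graph with clique number $d$, clique vector $\mathfrak{c}(T)=(c_1,\ldots,c_d)$ and $b$-vector $\mathfrak{b}(T)=(b_1,\ldots,b_d)$. Then \[ \sum_{i=1}^d b_i(x+1)^{i-1}=\sum_{i=1}^d c_i x^{i-1}. \]
   Context: For a graph $G$, $S(G)$ denotes the graph obtained from $G$ by adding a new vertex adjacent to all vertices of $G$, and $D(G)$ the graph obtained by adding a new isolated vertex. For a word $w=w_1\cdots w_n$ over $\{S,D\}$ with $w_n=S$, the threshold graph with word $w$ is $w_1(w_2(\cdots w_n(\emptyset)\cdots))$, $\emptyset$ being the graph with no vertices; every threshold graph arises from exactly one such word. The clique number $d$ of a threshold graph equals the number of letters $S$ in its word. The $b$-vector of a threshold graph $T$ with word $w$ is defined as follows: insert a separator right after every occurrence of $S$ in $w$, thereby cutting $w$ into $d$ consecutive subwords (read left to right), each ending with $S$; $b_i$ is the length of the $i$-th subword. (Example: $w=DDDSSDSDDS$ splits as $DDDS/S/DS/DDS$, giving $\mathfrak{b}=(4,1,2,3)$.) The clique vector $\mathfrak{c}(G)=(c_1,\ldots,c_d)$ of a graph $G$ records the number $c_i$ of cliques with exactly $i$ vertices, $d$ being the clique number. *)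

theory Defs
  imports Main
begin

datatype letter = S | D

text \<open>A word w = w_1 ... w_n (list index 0 = w_1) with w_n = S describes the threshold graph
  w_1(w_2(... w_n(empty)...)).  Vertices are the positions {..< length w}; the vertex at
  position i is created by letter w!i, after all vertices at positions j > i.  Hence for
  i < j, vertices i and j are adjacent iff w!i = S.\<close>

definition valid_word :: "letter list \<Rightarrow> bool" where
  "valid_word w \<longleftrightarrow> w \<noteq> [] \<and> last w = S"

definition tvertices :: "letter list \<Rightarrow> nat set" where
  "tvertices w = {..< length w}"

definition tadj :: "letter list \<Rightarrow> nat \<Rightarrow> nat \<Rightarrow> bool" where
  "tadj w i j \<longleftrightarrow> i \<in> tvertices w \<and> j \<in> tvertices w \<and> i \<noteq> j \<and> w ! (min i j) = S"

definition is_clique :: "letter list \<Rightarrow> nat set \<Rightarrow> bool" where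
  "is_clique w C \<longleftrightarrow> C \<subseteq> tvertices w \<and> (\<forall>i\<in>C. \<forall>j\<in>C. i \<noteq> j \<longrightarrow> tadj w i j)"

definition clique_count :: "letter list \<Rightarrow> nat \<Rightarrow> nat" where
  "clique_count w k = card {C. is_clique w C \<and> card C = k}"

definition clique_number :: "letter list \<Rightarrow> nat" where
  "clique_number w = Max (card ` {C. is_clique w C})"

fun bsplit :: "letter list \<Rightarrow> nat \<Rightarrow> nat list" where
  "bsplit [] acc = []"
| "bsplit (S # xs) acc = Suc acc # bsplit xs 0"
| "bsplit (D # xs) acc = bsplit xs (Suc acc)"

definition bvec :: "letter list \<Rightarrow> nat list" where
  "bvec w = bsplit w 0"

end

theory Submission
  imports Defs
begin

fun pe :: "nat list \<Rightarrow> int \<Rightarrow> int" where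
  "pe [] y = 0"
| "pe (a # l) y = int a + y * pe l y"

lemma pe_sum: "pe l y = (\<Sum>i<length l. int (l ! i) * y ^ i)"
proof (induction l)
  case Nil then show ?case by simp
next
  case (Cons a l)
  show ?case
    by (simp add: Cons sum.lessThan_Suc_shift sum_distrib_left mult.left_commute del: sum.lessThan_Suc)
qed

definition cnt :: "letter list \<Rightarrow> nat \<Rightarrow> nat" where
  "cnt xs m = length (filter (\<lambda>c. c = S) (take m xs))"

lemma length_bsplit: "length (bsplit xs acc) = length (filter (\<lambda>c. c = S) xs)"
  by (induction xs acc rule: bsplit.induct) auto

lemma pe_bsplit:
  "xs = [] \<or> last xs = S \<Longrightarrow>
   pe (bsplit xs acc) y = (\<Sum>m<length xs. y ^ cnt xs m) + (if xs = [] then 0 else int acc)"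
proof (induction xs acc rule: bsplit.induct)
  case (1 acc) then show ?case by simp
next
  case (2 xs acc)
  have "xs = [] \<or> last xs = S" using 2(2) by (cases xs) auto
  then have IH: "pe (bsplit xs 0) y = (\<Sum>m<length xs. y ^ cnt xs m)" using 2(1) by simp
  have "(\<Sum>m<length (S # xs). y ^ cnt (S # xs) m) = 1 + y * (\<Sum>m<length xs. y ^ cnt xs m)"
    by (simp add: sum.lessThan_Suc_shift cnt_def sum_distrib_left del: sum.lessThan_Suc)
  then show ?case using IH by simp
next
  case (3 xs acc)
  have ne: "xs \<noteq> []" using 3(2) by auto
  then have "last xs = S" using 3(2) by simp
  then have IH: "pe (bsplit xs (Suc acc)) y = (\<Sum>m<length xs. y ^ cnt xs m) + int (Suc acc)"
    using 3(1) ne by simp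
  have "(\<Sum>m<length (D # xs). y ^ cnt (D # xs) m) = 1 + (\<Sum>m<length xs. y ^ cnt xs m)"
    by (simp add: sum.lessThan_Suc_shift cnt_def del: sum.lessThan_Suc)
  then show ?case using IH by simp
qed

definition Sb :: "letter list \<Rightarrow> nat \<Rightarrow> nat set" where
  "Sb w m = {j. j < m \<and> w ! j = S}"

lemma cnt_Sb: "m \<le> length w \<Longrightarrow> cnt w m = card (Sb w m)"
proof -
  assume m: "m \<le> length w"
  have "{i. i < length (take m w) \<and> take m w ! i = S} = {j. j < m \<and> w ! j = S}"
    using m by auto
  then show ?thesis unfolding cnt_def Sb_def length_filter_conv_card by simp
qed

lemma clique_iff:
  "is_clique w C \<longleftrightarrow> C \<subseteq> {..<length w} \<and> (\<forall>i\<in>C. \<forall>j\<in>C. i < j \<longrightarrow> w ! i = S)"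
proof
  assume h: "is_clique w C"
  show "C \<subseteq> {..<length w} \<and> (\<forall>i\<in>C. \<forall>j\<in>C. i < j \<longrightarrow> w ! i = S)"
  proof (intro conjI ballI impI)
    show "C \<subseteq> {..<length w}" using h by (simp add: is_clique_def tvertices_def)
    fix i j assume "i \<in> C" "j \<in> C" "i < j"
    then have "tadj w i j" using h unfolding is_clique_def by auto
    then show "w ! i = S" using \<open>i < j\<close> by (simp add: tadj_def min_def)
  qed
next
  assume h: "C \<subseteq> {..<length w} \<and> (\<forall>i\<in>C. \<forall>j\<in>C. i < j \<longrightarrow> w ! i = S)"
  show "is_clique w C" unfolding is_clique_def
  proof (intro conjI ballI impI)
    show "C \<subseteq> tvertices w" using h by (simp add: tvertices_def)
    fix i j assume ij: "i \<in> C" "j \<in> C" "i \<noteq> j"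
    show "tadj w i j"
    proof (cases "i < j")
      case True then show ?thesis using h ij by (auto simp: tadj_def tvertices_def min_def)
    next
      case False then have "j < i" using ij by simp
      then show ?thesis using h ij by (auto simp: tadj_def tvertices_def min_def)
    qed
  qed
qed

lemma cliques_k:
  assumes "k \<ge> 1"
  shows "{C. is_clique w C \<and> card C = k} =
    (\<Union>m\<in>{..<length w}. insert m ` {A. A \<subseteq> Sb w m \<and> card A = k - 1})"
proof (intro equalityI subsetI)
  fix C assume "C \<in> {C. is_clique w C \<and> card C = k}"
  then have cl: "is_clique w C" and ck: "card C = k" by auto
  have fin: "finite C" "C \<noteq> {}" using ck assms by (metis card.infinite not_one_le_zero, metis card.empty not_one_le_zero)
  define m where "m = Max C"
  have mC: "m \<in> C" using fin m_def by simp
  have ml: "m < length w" using mC cl by (auto simp: clique_iff)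
  have A: "C - {m} \<subseteq> Sb w m"
  proof
    fix i assume i: "i \<in> C - {m}"
    then have "i < m" using fin m_def by (metis DiffD1 DiffD2 Max_ge insertI1 order_le_neq_trans)
    then show "i \<in> Sb w m" using cl mC i by (auto simp: clique_iff Sb_def)
  qed
  have "card (C - {m}) = k - 1" using ck mC fin by simp
  moreover have "C = insert m (C - {m})" using mC by auto
  ultimately show "C \<in> (\<Union>m\<in>{..<length w}. insert m ` {A. A \<subseteq> Sb w m \<and> card A = k - 1})"
    using A ml by blast
next
  fix C assume "C \<in> (\<Union>m\<in>{..<length w}. insert m ` {A. A \<subseteq> Sb w m \<and> card A = k - 1})"
  then obtain m A where m: "m < length w" and A: "A \<subseteq> Sb w m" "card A = k - 1" and C: "C = insert m A"
    by auto
  have finA: "finite A" using A(1) by (rule finite_subset) (simp add: Sb_def)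
  have mA: "m \<notin> A" using A(1) by (auto simp: Sb_def)
  have "card C = k" using C finA mA A(2) assms by simp
  moreover have "is_clique w C"
    unfolding clique_iff
  proof
    show "C \<subseteq> {..<length w}" using C A(1) m by (auto simp: Sb_def)
    show "\<forall>i\<in>C. \<forall>j\<in>C. i < j \<longrightarrow> w ! i = S"
      using C A(1) by (auto simp: Sb_def)
  qed
  ultimately show "C \<in> {C. is_clique w C \<and> card C = k}" by simp
qed

lemma finite_Sb: "finite (Sb w m)" by (simp add: Sb_def)

lemma clique_count_sum:
  assumes "k \<ge> 1"
  shows "clique_count w k = (\<Sum>m<length w. card (Sb w m) choose (k - 1))"
proof -
  have "clique_count w k = card (\<Union>m\<in>{..<length w}. insert m ` {A. A \<subseteq> Sb w m \<and> card A = k - 1})"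
    unfolding clique_count_def cliques_k[OF assms] ..
  also have "\<dots> = (\<Sum>m<length w. card (insert m ` {A. A \<subseteq> Sb w m \<and> card A = k - 1}))"
  proof (rule card_UN_disjoint)
    show "\<forall>i\<in>{..<length w}. finite (insert i ` {A. A \<subseteq> Sb w i \<and> card A = k - 1})"
      using finite_Sb by auto
    show "\<forall>i\<in>{..<length w}. \<forall>j\<in>{..<length w}. (i::nat) \<noteq> j \<longrightarrow>
      insert i ` {A. A \<subseteq> Sb w i \<and> card A = k - 1} \<inter> insert j ` {A. A \<subseteq> Sb w j \<and> card A = k - 1} = {}"
    proof (intro ballI impI)
      fix i j :: nat assume "i \<noteq> j"
      show "insert i ` {A. A \<subseteq> Sb w i \<and> card A = k - 1} \<inter> insert j ` {A. A \<subseteq> Sb w j \<and> card A = k - 1} = {}"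
      proof (rule ccontr)
        assume "\<not> ?thesis"
        then obtain A B where "A \<subseteq> Sb w i" "B \<subseteq> Sb w j" "insert i A = insert j B" by blast
        then have "i \<in> insert j B" "j \<in> insert i A" by auto
        then show False using \<open>A \<subseteq> Sb w i\<close> \<open>B \<subseteq> Sb w j\<close> \<open>i \<noteq> j\<close> unfolding Sb_def by (metis (mono_tags, lifting) insertE mem_Collect_eq order_less_asym subsetD)
      qed
    qed
  qed simp
  also have "\<dots> = (\<Sum>m<length w. card (Sb w m) choose (k - 1))"
  proof (rule sum.cong[OF refl])
    fix m
    have inj: "inj_on (insert m) {A. A \<subseteq> Sb w m \<and> card A = k - 1}"
    proof (rule inj_onI)
      fix A B assume "A \<in> {A. A \<subseteq> Sb w m \<and> card A = k - 1}" "B \<in> {A. A \<subseteq> Sb w m \<and> card A = k - 1}"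
        "insert m A = insert m B"
      moreover have "m \<notin> Sb w m" by (simp add: Sb_def)
      ultimately show "A = B" by (metis insert_ident mem_Collect_eq subsetD)
    qed
    show "card (insert m ` {A. A \<subseteq> Sb w m \<and> card A = k - 1}) = card (Sb w m) choose (k - 1)"
      using card_image[OF inj] n_subsets[OF finite_Sb] by simp
  qed
  finally show ?thesis .
qed


lemma Sb_lt:
  assumes "valid_word w" "m < length w"
  shows "card (Sb w m) < card (Sb w (length w))"
proof (rule psubset_card_mono)
  show "finite (Sb w (length w))" by (rule finite_Sb)
  have ne: "w \<noteq> []" and l: "last w = S" using assms(1) by (auto simp: valid_word_def)
  have "w ! (length w - 1) = S" using ne l by (simp add: last_conv_nth)
  then have "length w - 1 \<in> Sb w (length w)" using ne by (simp add: Sb_def)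
  moreover have "length w - 1 \<notin> Sb w m" using assms(2) by (auto simp: Sb_def)
  moreover have "Sb w m \<subseteq> Sb w (length w)" using assms(2) by (auto simp: Sb_def)
  ultimately show "Sb w m \<subset> Sb w (length w)" by blast
qed

lemma clique_number_eq:
  assumes "valid_word w"
  shows "clique_number w = card (Sb w (length w))"
  unfolding clique_number_def
proof (rule Max_eqI)
  have "{C. is_clique w C} \<subseteq> Pow {..<length w}" by (auto simp: clique_iff)
  then show "finite (card ` {C. is_clique w C})" by (meson finite_Pow_iff finite_imageI finite_lessThan finite_subset)
  have "is_clique w (Sb w (length w))" by (auto simp: clique_iff Sb_def)
  then show "card (Sb w (length w)) \<in> card ` {C. is_clique w C}" by blast
  fix y assume "y \<in> card ` {C. is_clique w C}"
  then obtain C where C: "is_clique w C" "y = card C" by blast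
  show "y \<le> card (Sb w (length w))"
  proof (cases "y = 0")
    case True then show ?thesis by simp
  next
    case False
    then have "C \<in> {C. is_clique w C \<and> card C = y}" using C by simp
    then have "C \<in> (\<Union>m\<in>{..<length w}. insert m ` {A. A \<subseteq> Sb w m \<and> card A = y - 1})"
      using cliques_k[of y w] False by simp
    then obtain m A where m: "m < length w" and A: "A \<subseteq> Sb w m" "card A = y - 1"
      by blast
    have "card A \<le> card (Sb w m)" using A(1) finite_Sb by (rule card_mono[rotated])
    then show ?thesis using Sb_lt[OF assms m] A(2) False by linarith
  qed
qed

lemma sum_shift1: "(\<Sum>i = 1..(d::nat). f (i - 1)) = (\<Sum>i<d. (f i :: int))"
  by (induction d) (auto simp: atLeastAtMostSuc_conv add.commute)

lemma binom_ext:
  assumes "N < d"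
  shows "(\<Sum>i<d. int (N choose i) * x ^ i) = (x + 1) ^ N"
proof -
  have "(x + 1) ^ N = (\<Sum>k\<le>N. int (N choose k) * x ^ k)"
    using binomial_ring[of x 1 N] by simp
  also have "\<dots> = (\<Sum>i<d. int (N choose i) * x ^ i)"
    by (rule sum.mono_neutral_left) (use assms in auto)
  finally show ?thesis by simp
qed

theorem proposition2p2:
  fixes w :: "letter list" and x :: int
  assumes "valid_word w"
  shows "(\<Sum>i = 1..clique_number w. int (bvec w ! (i - 1)) * (x + 1) ^ (i - 1))
       = (\<Sum>i = 1..clique_number w. int (clique_count w i) * x ^ (i - 1))"
proof -
  define n where "n = length w"
  define d where "d = card (Sb w n)"
  have ne: "w \<noteq> []" and l: "last w = S" using assms by (auto simp: valid_word_def)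
  have cn: "clique_number w = d" using clique_number_eq[OF assms] by (simp add: d_def n_def)
  have lb: "length (bvec w) = d"
    using cnt_Sb[of n w] by (simp add: bvec_def length_bsplit cnt_def d_def n_def)
  have "(\<Sum>i = 1..clique_number w. int (bvec w ! (i - 1)) * (x + 1) ^ (i - 1))
      = (\<Sum>i<d. int (bvec w ! i) * (x + 1) ^ i)"
    unfolding cn by (rule sum_shift1)
  also have "\<dots> = pe (bvec w) (x + 1)" by (simp add: pe_sum lb)
  also have "\<dots> = (\<Sum>m<n. (x + 1) ^ cnt w m)"
    using pe_bsplit[of w 0 "x + 1"] l ne by (simp add: bvec_def n_def)
  also have "\<dots> = (\<Sum>m<n. (x + 1) ^ card (Sb w m))"
    by (rule sum.cong[OF refl]) (simp add: cnt_Sb n_def)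
  also have "\<dots> = (\<Sum>m<n. \<Sum>i<d. int (card (Sb w m) choose i) * x ^ i)"
    by (rule sum.cong[OF refl]) (simp add: binom_ext Sb_lt[OF assms] d_def n_def)
  also have "\<dots> = (\<Sum>i<d. \<Sum>m<n. int (card (Sb w m) choose i) * x ^ i)"
    by (rule sum.swap)
  also have "\<dots> = (\<Sum>i<d. int (clique_count w (i + 1)) * x ^ i)"
    by (rule sum.cong[OF refl]) (simp add: clique_count_sum n_def sum_distrib_right)
  also have "\<dots> = (\<Sum>i = 1..clique_number w. int (clique_count w i) * x ^ (i - 1))"
    unfolding cn using sum_shift1[of "\<lambda>i. int (clique_count w (i + 1)) * x ^ i" d] by simp
  finally show ?thesis .
qed

end
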